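(* For all $k\in\mathbb N_+$ and $T\ge0$, writing $q_c=\lfloor k/c\rfloor$ for $c\in\mathbb N_+$, $$v(k,T)\le\min_{c\in\mathbb N_+}\Big\{\big(q_cF(c)+F(k-c\,q_c)\big)\mathbb P(N(T)\ge q_c)+\sum_{n=0}^{q_c-1}\big(nF(c)+F(k-nc)\big)\mathbb P(N(T)=n)\Big\}.$$
   Context: Let $\lambda>0$ and let $N$ be a Poisson process with intensity $\lambda$, arrival times $0<\sigma_1<\sigma_2<\cdots$, and natural filtration $\mathcal F_t=\sigma(N_s:s\le t)$. Let $F:[0,\infty)\to[0,\infty)$ be strictly increasing and strictly convex with $F(0)=0$. For $k\in\{0,1,\dots\}$ let $\mathcal A_k$ be the set of $(\mathcal F_t)$-adapted, integer-valued, nonnegative, non-increasing processes $\xi$ with $\xi_0=k$ whose values change only at arrival times of $N$, and $v(k,T)=\inf_{\xi\in\mathcal A_k}\mathbb E[\sum_{i:\sigma_i\le T}F(\xi_{\sigma_i-}-\xi_{\sigma_i})+F(\xi_T)]$. $\lfloor\cdot\rfloor$ is the floor function. *)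

theory Defs
  imports "HOL-Probability.Probability"
begin

definition strictly_convex_on :: "real set \<Rightarrow> (real \<Rightarrow> real) \<Rightarrow> bool" where
  "strictly_convex_on S F \<longleftrightarrow>
     (\<forall>x\<in>S. \<forall>y\<in>S. x \<noteq> y \<longrightarrow> (\<forall>u::real. 0 < u \<and> u < 1 \<longrightarrow>
        F (u * x + (1 - u) * y) < u * F x + (1 - u) * F y))"

definition poisson_process :: "'a measure \<Rightarrow> real \<Rightarrow> (real \<Rightarrow> 'a \<Rightarrow> nat) \<Rightarrow> bool" where
  "poisson_process M lam N \<longleftrightarrow>
     prob_space M \<and>
     (\<forall>t\<ge>0. N t \<in> measurable M (count_space UNIV)) \<and>
     (\<forall>\<omega>\<in>space M.
        N 0 \<omega> = 0 \<and>
        (\<forall>s t. 0 \<le> s \<and> s \<le> t \<longrightarrow> N s \<omega> \<le> N t \<omega>) \<and>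
        (\<forall>t\<ge>0. \<exists>d>0. \<forall>s. t \<le> s \<and> s < t + d \<longrightarrow> N s \<omega> = N t \<omega>) \<and>
        (\<forall>t>0. \<exists>d>0. \<forall>s. t - d < s \<and> s < t \<longrightarrow> N t \<omega> \<le> N s \<omega> + 1)) \<and>
     (\<forall>ts::real list. sorted ts \<and> (\<forall>t\<in>set ts. 0 \<le> t) \<longrightarrow>
        prob_space.indep_vars M (\<lambda>_. count_space UNIV)
          (\<lambda>i \<omega>. N (ts ! Suc i) \<omega> - N (ts ! i) \<omega>) {..<length ts - 1}) \<and>
     (\<forall>s t n. 0 \<le> s \<and> s \<le> t \<longrightarrow>
        measure M {\<omega>\<in>space M. N t \<omega> - N s \<omega> = n}
          = exp (- lam * (t - s)) * (lam * (t - s)) ^ n / fact n)"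

definition natural_filtration :: "'a measure \<Rightarrow> (real \<Rightarrow> 'a \<Rightarrow> nat) \<Rightarrow> real \<Rightarrow> 'a measure" where
  "natural_filtration M N t =
     sigma (space M) {N s -` A \<inter> space M | s A. 0 \<le> s \<and> s \<le> t}"

definition arrival_time :: "(real \<Rightarrow> 'a \<Rightarrow> nat) \<Rightarrow> nat \<Rightarrow> 'a \<Rightarrow> real" where
  "arrival_time N i \<omega> = Inf {t. 0 \<le> t \<and> i \<le> N t \<omega>}"

definition left_lim :: "(real \<Rightarrow> nat) \<Rightarrow> real \<Rightarrow> real" where
  "left_lim f t = Lim (at_left t) (\<lambda>s. real (f s))"

definition admissible :: "'a measure \<Rightarrow> (real \<Rightarrow> 'a \<Rightarrow> nat) \<Rightarrow> nat \<Rightarrow> (real \<Rightarrow> 'a \<Rightarrow> nat) set" where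
  "admissible M N k = {\<xi>.
     (\<forall>t\<ge>0. \<xi> t \<in> measurable (natural_filtration M N t) (count_space UNIV)) \<and>
     (\<forall>\<omega>\<in>space M.
        \<xi> 0 \<omega> = k \<and>
        (\<forall>s t. 0 \<le> s \<and> s \<le> t \<longrightarrow> \<xi> t \<omega> \<le> \<xi> s \<omega>) \<and>
        (\<forall>s t. 0 \<le> s \<and> s \<le> t \<and> N s \<omega> = N t \<omega> \<longrightarrow> \<xi> s \<omega> = \<xi> t \<omega>))}"

definition cost :: "(real \<Rightarrow> real) \<Rightarrow> (real \<Rightarrow> 'a \<Rightarrow> nat) \<Rightarrow> (real \<Rightarrow> 'a \<Rightarrow> nat) \<Rightarrow> real \<Rightarrow> 'a \<Rightarrow> real" where
  "cost F N \<xi> T \<omega> =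
     (\<Sum>i\<in>{i. 1 \<le> i \<and> arrival_time N i \<omega> \<le> T}.
        F (left_lim (\<lambda>t. \<xi> t \<omega>) (arrival_time N i \<omega>) - real (\<xi> (arrival_time N i \<omega>) \<omega>)))
     + F (real (\<xi> T \<omega>))"

definition value_fn :: "'a measure \<Rightarrow> (real \<Rightarrow> real) \<Rightarrow> (real \<Rightarrow> 'a \<Rightarrow> nat) \<Rightarrow> nat \<Rightarrow> real \<Rightarrow> ennreal" where
  "value_fn M F N k T = (INF \<xi>\<in>admissible M N k. \<integral>\<^sup>+ \<omega>. ennreal (cost F N \<xi> T \<omega>) \<partial>M)"

end

theory Submission imports Defs begin

lemma arr_facts:
  fixes f :: "real \<Rightarrow> nat" and i :: nat
  assumes f0: "f 0 = 0" and mono: "\<And>s t. 0\<le>s \<Longrightarrow> s\<le>t \<Longrightarrow> f s \<le> f t"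
  and rc: "\<And>t. t\<ge>0 \<Longrightarrow> \<exists>d>0. \<forall>s. t\<le>s \<and> s<t+d \<longrightarrow> f s = f t"
  and jump: "\<And>t. t>0 \<Longrightarrow> \<exists>d>0. \<forall>s. t-d<s \<and> s<t \<longrightarrow> f t \<le> f s + 1"
  and ne: "{t. 0\<le>t \<and> i \<le> f t} \<noteq> {}" and i: "i \<ge> 1"
  shows "0 < Inf {t. 0\<le>t \<and> i \<le> f t}" "f (Inf {t. 0\<le>t \<and> i \<le> f t}) = i"
    "eventually (\<lambda>s. f s = i - 1) (at_left (Inf {t. 0\<le>t \<and> i \<le> f t}))"
proof -
  define A where "A = {t. 0\<le>t \<and> i \<le> f t}"
  define \<sigma> where "\<sigma> = Inf A"
  have neA: "A \<noteq> {}" using ne A_def by simp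
  have bdd: "bdd_below A" unfolding A_def by (rule bdd_belowI[of _ 0]) auto
  obtain d0 where d0: "d0>0" "\<forall>s. 0\<le>s \<and> s<0+d0 \<longrightarrow> f s = f 0" using rc[of 0] by auto
  have "d0 \<le> \<sigma>" unfolding \<sigma>_def
  proof (rule cInf_greatest[OF neA])
    fix t assume "t \<in> A"
    hence t: "0 \<le> t" "i \<le> f t" unfolding A_def by auto
    show "d0 \<le> t"
    proof (rule ccontr)
      assume "\<not> d0 \<le> t"
      hence "f t = 0" using d0(2) t f0 by simp
      thus False using t i by simp
    qed
  qed
  hence s0: "0 < \<sigma>" using d0 by simp
  then show "0 < Inf {t. 0\<le>t \<and> i \<le> f t}" using \<sigma>_def A_def by simp
  obtain d1 where d1: "d1>0" "\<forall>s. \<sigma>\<le>s \<and> s<\<sigma>+d1 \<longrightarrow> f s = f \<sigma>" using rc[of \<sigma>] s0 by auto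
  obtain a where a: "a \<in> A" "a < \<sigma> + d1" using cInf_less_iff[OF neA bdd, of "\<sigma>+d1"] d1 \<sigma>_def by auto
  have "\<sigma> \<le> a" unfolding \<sigma>_def by (rule cInf_lower[OF a(1) bdd])
  hence "f a = f \<sigma>" using d1(2) a(2) by blast
  moreover have "i \<le> f a" using a(1) unfolding A_def by simp
  ultimately have ge: "i \<le> f \<sigma>" by simp
  have below: "f s < i" if "0 \<le> s" "s < \<sigma>" for s
  proof (rule ccontr)
    assume "\<not> f s < i"
    hence "s \<in> A" using that unfolding A_def by auto
    hence "\<sigma> \<le> s" unfolding \<sigma>_def by (rule cInf_lower[OF _ bdd])
    thus False using that by simp
  qed
  obtain d2 where d2: "d2>0" "\<forall>s. \<sigma>-d2<s \<and> s<\<sigma> \<longrightarrow> f \<sigma> \<le> f s + 1" using jump[OF s0] by auto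
  define e where "e = min d2 \<sigma>"
  have e: "e > 0" using d2 s0 e_def by simp
  have key: "f s = i - 1 \<and> f \<sigma> = i" if "\<sigma> - e < s" "s < \<sigma>" for s
  proof -
    have "0 \<le> s" "\<sigma>-d2<s" using that e_def by auto
    hence "f s < i" "f \<sigma> \<le> f s + 1" using below d2 that by auto
    thus ?thesis using ge by linarith
  qed
  have "f \<sigma> = i" using key[of "\<sigma> - e/2"] e by simp
  thus "f (Inf {t. 0\<le>t \<and> i \<le> f t}) = i" using \<sigma>_def A_def by simp
  have "eventually (\<lambda>s. s \<in> {\<sigma>-e<..<\<sigma>}) (at_left \<sigma>)" by (rule eventually_at_left_real) (use e in simp)
  hence "eventually (\<lambda>s. f s = i - 1) (at_left \<sigma>)" by (rule eventually_mono) (use key in auto)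
  thus "eventually (\<lambda>s. f s = i - 1) (at_left (Inf {t. 0\<le>t \<and> i \<le> f t}))" using \<sigma>_def A_def by simp
qed


lemma sum_if_min: "(\<Sum>i=1..n. if i \<le> q then (a::real) else 0) = real (min n q) * a"
  by (induction n) (auto simp: algebra_simps min_def)

lemma path_cost:
  fixes f :: "real \<Rightarrow> nat" and F :: "real \<Rightarrow> real"
  assumes f0: "f 0 = 0" and mono: "\<And>s t. 0\<le>s \<Longrightarrow> s\<le>t \<Longrightarrow> f s \<le> f t"
  and rc: "\<And>t. t\<ge>0 \<Longrightarrow> \<exists>d>0. \<forall>s. t\<le>s \<and> s<t+d \<longrightarrow> f s = f t"
  and jump: "\<And>t. t>0 \<Longrightarrow> \<exists>d>0. \<forall>s. t-d<s \<and> s<t \<longrightarrow> f t \<le> f s + 1"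
  and cq: "c * q \<le> k" and F0: "F 0 = 0" and Fc: "F (real c) \<ge> 0" and T: "T \<ge> 0"
  shows "(\<Sum>i\<in>{i. 1 \<le> i \<and> Inf {t. 0\<le>t \<and> i \<le> f t} \<le> T}.
           F (left_lim (\<lambda>t. k - c * min (f t) q) (Inf {t. 0\<le>t \<and> i \<le> f t})
              - real (k - c * min (f (Inf {t. 0\<le>t \<and> i \<le> f t})) q)))
         + F (real (k - c * min (f T) q))
       \<le> real (min (f T) q) * F (real c) + F (real k - real c * real (min (f T) q))"
proof -
  define \<sigma> where "\<sigma> i = Inf {t. 0\<le>t \<and> i \<le> f t}" for i
  define S where "S = {i. 1 \<le> i \<and> \<sigma> i \<le> T}"
  define n where "n = f T"
  define tm where "tm i = F (left_lim (\<lambda>t. k - c * min (f t) q) (\<sigma> i) - real (k - c * min (f (\<sigma> i)) q))" for i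
  have bdd: "bdd_below {t. 0\<le>t \<and> i \<le> f t}" for i by (rule bdd_belowI[of _ 0]) auto
  have tm_eq: "tm i = (if i \<le> q then F (real c) else 0)" if i: "i \<in> {1..n}" for i
  proof -
    have ne: "{t. 0\<le>t \<and> i \<le> f t} \<noteq> {}" using i T n_def by auto
    have i1: "1 \<le> i" using i by simp
    have fa: "0 < \<sigma> i" "f (\<sigma> i) = i" "eventually (\<lambda>s. f s = i - 1) (at_left (\<sigma> i))"
      using arr_facts[OF f0 mono rc jump ne i1] unfolding \<sigma>_def by auto
    have ev: "eventually (\<lambda>s. real (k - c * min (f s) q) = real (k - c * min (i - 1) q)) (at_left (\<sigma> i))"
      by (rule eventually_mono[OF fa(3)]) simp
    have ll: "left_lim (\<lambda>t. k - c * min (f t) q) (\<sigma> i) = real (k - c * min (i - 1) q)"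
      unfolding left_lim_def by (rule tendsto_Lim) (simp, rule tendsto_eventually[OF ev])
    have m1: "c * min (i - 1) q \<le> k" "c * min i q \<le> k" using cq
      by (meson dual_order.trans min.cobounded2 mult_le_mono2)+
    show ?thesis
    proof (cases "i \<le> q")
      case True
      have a1: "c * (i - 1) + c = c * i" using i1 by (cases i) simp_all
      have a2: "c * i \<le> k" using m1(2) True by (simp add: min_def)
      have e: "k - c * (i - 1) = (k - c * i) + c" using a1 a2 by linarith
      have "real (k - c * (i - 1)) - real (k - c * i) = real c"
        by (simp only: e of_nat_add)
      moreover have "min (i - 1) q = i - 1" "min i q = i" using True by auto
      ultimately show ?thesis unfolding tm_def using ll fa(2) True by simp
    next
      case False
      hence "min (i - 1) q = q" "min i q = q" by auto
      thus ?thesis unfolding tm_def using ll fa(2) False F0 by simp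
    qed
  qed
  have tm_nn: "tm i \<ge> 0" if "i \<in> {1..n}" for i using tm_eq[OF that] Fc by simp
  have sub1: "{1..n} \<subseteq> S"
  proof
    fix i assume i: "i \<in> {1..n}"
    have "T \<in> {t. 0\<le>t \<and> i \<le> f t}" using i T n_def by auto
    hence "\<sigma> i \<le> T" unfolding \<sigma>_def by (rule cInf_lower[OF _ bdd])
    thus "i \<in> S" using i S_def by auto
  qed
  have sumS: "sum tm S \<le> sum tm {1..n}"
  proof (cases "finite S")
    case True
    have "S \<subseteq> {1..n}"
    proof
      fix i assume iS: "i \<in> S"
      show "i \<in> {1..n}"
      proof (rule ccontr)
        assume "i \<notin> {1..n}"
        hence gt: "n < i" "1 \<le> i" using iS S_def by auto
        have emp: "{t. 0\<le>t \<and> i \<le> f t} = {}"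
        proof (rule ccontr)
          assume ne: "{t. 0\<le>t \<and> i \<le> f t} \<noteq> {}"
          have fa: "0 < \<sigma> i" "f (\<sigma> i) = i"
            using arr_facts[OF f0 mono rc jump ne gt(2)] unfolding \<sigma>_def by auto
          have "f (\<sigma> i) \<le> f T" using mono[of "\<sigma> i" T] fa(1) iS S_def by auto
          thus False using fa(2) gt n_def by simp
        qed
        have "{i..} \<subseteq> S"
        proof
          fix j assume "j \<in> {i..}"
          hence ej: "{t. 0\<le>t \<and> j \<le> f t} = {}" using emp by auto
          have "\<sigma> j = \<sigma> i" unfolding \<sigma>_def by (simp only: ej emp)
          thus "j \<in> S" using iS \<open>j \<in> {i..}\<close> gt S_def by auto
        qed
        hence "finite {i..}" using True finite_subset by blast
        with infinite_Ici[of i] show False by (rule notE)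
      qed
    qed
    thus ?thesis using sub1 by auto
  next
    case False
    have "0 \<le> sum tm {1..n}" by (rule sum_nonneg) (rule tm_nn)
    thus ?thesis using False by simp
  qed
  have "sum tm {1..n} = real (min n q) * F (real c)"
    using sum.cong[OF refl tm_eq, of "{1..n}"] sum_if_min by simp
  moreover have "real (k - c * min (f T) q) = real k - real c * real (min (f T) q)"
  proof -
    have "c * min (f T) q \<le> k" by (meson cq le_trans min.cobounded2 mult_le_mono2)
    thus ?thesis by (simp add: of_nat_diff)
  qed
  ultimately have "sum tm S + F (real (k - c * min (f T) q))
       \<le> real (min (f T) q) * F (real c) + F (real k - real c * real (min (f T) q))"
    using sumS n_def by simp
  thus ?thesis unfolding tm_def S_def \<sigma>_def n_def .
qed


lemma integral_part:
  fixes X :: "'a \<Rightarrow> nat" and a :: "nat \<Rightarrow> real"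
  assumes PS: "prob_space M" and mX: "X \<in> measurable M (count_space UNIV)"
  and a_nn: "\<And>n. n < q \<Longrightarrow> a n \<ge> 0" and b_nn: "b \<ge> 0"
  shows "(\<integral>\<^sup>+\<omega>. ennreal (if X \<omega> < q then a (X \<omega>) else b) \<partial>M)
       = ennreal (b * measure M {\<omega>\<in>space M. X \<omega> \<ge> q} + (\<Sum>n<q. a n * measure M {\<omega>\<in>space M. X \<omega> = n}))"
proof -
  interpret prob_space M by (rule PS)
  have pre: "X -` Y \<inter> space M \<in> sets M" for Y by (rule measurable_sets[OF mX]) simp
  define A where "A n = {\<omega>\<in>space M. X \<omega> = n}" for n
  define B where "B = {\<omega>\<in>space M. X \<omega> \<ge> q}"
  have AM[measurable]: "A n \<in> sets M" for n
  proof -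
    have "A n = X -` {n} \<inter> space M" unfolding A_def by auto
    thus ?thesis using pre by simp
  qed
  have BM[measurable]: "B \<in> sets M"
  proof -
    have "B = X -` {q..} \<inter> space M" unfolding B_def by auto
    thus ?thesis using pre by simp
  qed
  have pw: "ennreal (if X \<omega> < q then a (X \<omega>) else b)
      = (\<Sum>n<q. ennreal (a n) * indicator (A n) \<omega>) + ennreal b * indicator B \<omega>"
    if w: "\<omega> \<in> space M" for \<omega>
  proof -
    have s: "(\<Sum>n<q. ennreal (a n) * indicator (A n) \<omega>) = (\<Sum>n<q. if n = X \<omega> then ennreal (a n) else 0)"
      by (rule sum.cong) (auto simp: indicator_def A_def w)
    show ?thesis
    proof (cases "X \<omega> < q")
      case True
      thus ?thesis unfolding s sum.delta[OF finite_lessThan] using w by (simp add: B_def indicator_def)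
    next
      case False
      thus ?thesis unfolding s sum.delta[OF finite_lessThan] using w by (simp add: B_def indicator_def)
    qed
  qed
  have "(\<integral>\<^sup>+\<omega>. ennreal (if X \<omega> < q then a (X \<omega>) else b) \<partial>M)
     = (\<integral>\<^sup>+\<omega>. (\<Sum>n<q. ennreal (a n) * indicator (A n) \<omega>) + ennreal b * indicator B \<omega> \<partial>M)"
    by (rule nn_integral_cong) (rule pw)
  also have "\<dots> = (\<integral>\<^sup>+\<omega>. (\<Sum>n<q. ennreal (a n) * indicator (A n) \<omega>) \<partial>M) + (\<integral>\<^sup>+\<omega>. ennreal b * indicator B \<omega> \<partial>M)"
    by (rule nn_integral_add) measurable
  also have "(\<integral>\<^sup>+\<omega>. (\<Sum>n<q. ennreal (a n) * indicator (A n) \<omega>) \<partial>M) = (\<Sum>n<q. \<integral>\<^sup>+\<omega>. ennreal (a n) * indicator (A n) \<omega> \<partial>M)"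
    by (rule nn_integral_sum) measurable
  also have "\<dots> = (\<Sum>n<q. ennreal (a n) * emeasure M (A n))"
    by (rule sum.cong[OF refl]) (rule nn_integral_cmult_indicator[OF AM])
  also have "\<dots> = (\<Sum>n<q. ennreal (a n * measure M (A n)))"
    by (rule sum.cong[OF refl]) (simp add: emeasure_eq_measure ennreal_mult a_nn)
  also have "\<dots> = ennreal (\<Sum>n<q. a n * measure M (A n))"
    by (rule sum_ennreal) (simp add: a_nn)
  also have "(\<integral>\<^sup>+\<omega>. ennreal b * indicator B \<omega> \<partial>M) = ennreal (b * measure M B)"
    by (simp add: nn_integral_cmult_indicator[OF BM] emeasure_eq_measure ennreal_mult b_nn)
  finally have eq: "(\<integral>\<^sup>+\<omega>. ennreal (if X \<omega> < q then a (X \<omega>) else b) \<partial>M)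
     = ennreal (\<Sum>n<q. a n * measure M (A n)) + ennreal (b * measure M B)" .
  have n1: "0 \<le> (\<Sum>n<q. a n * measure M (A n))" by (rule sum_nonneg) (simp add: a_nn)
  have n2: "0 \<le> b * measure M B" using b_nn by simp
  have "ennreal (\<Sum>n<q. a n * measure M (A n)) + ennreal (b * measure M B)
      = ennreal (b * measure M B + (\<Sum>n<q. a n * measure M (A n)))"
    by (subst add.commute, rule ennreal_plus[OF n2 n1, symmetric])
  with eq have "(\<integral>\<^sup>+\<omega>. ennreal (if X \<omega> < q then a (X \<omega>) else b) \<partial>M)
      = ennreal (b * measure M B + (\<Sum>n<q. a n * measure M (A n)))" by (rule trans)
  thus ?thesis unfolding A_def B_def .
qed


theorem lemma2p2:
  fixes M :: "'a measure" and lam :: real and N :: "real \<Rightarrow> 'a \<Rightarrow> nat"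
    and F :: "real \<Rightarrow> real" and k :: nat and T :: real
  assumes "lam > 0" and "poisson_process M lam N"
    and "strict_mono_on {0..} F" and "strictly_convex_on {0..} F" and "F 0 = 0"
    and "\<forall>x\<ge>0. F x \<ge> 0"
    and "k \<ge> 1" and "T \<ge> 0"
  shows "\<forall>c::nat. c \<ge> 1 \<longrightarrow>
    (let q = nat \<lfloor>real k / real c\<rfloor> in
      value_fn M F N k T \<le> ennreal (
        (real q * F (real c) + F (real k - real c * real q))
          * measure M {\<omega>\<in>space M. N T \<omega> \<ge> q}
        + (\<Sum>n<q. (real n * F (real c) + F (real k - real n * real c))
          * measure M {\<omega>\<in>space M. N T \<omega> = n})))"
proof (intro allI impI)
  fix c :: nat assume c1: "c \<ge> 1"
  define q where "q = nat \<lfloor>real k / real c\<rfloor>"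
  have qd: "q = k div c" unfolding q_def by (simp add: floor_divide_of_nat_eq)
  have cq: "c * q \<le> k" unfolding qd by (rule times_div_less_eq_dividend)
  note pp = assms(2)[unfolded poisson_process_def]
  have PS: "prob_space M" using conjunct1[OF pp] .
  have measN: "\<And>t. t \<ge> 0 \<Longrightarrow> N t \<in> measurable M (count_space UNIV)" using conjunct1[OF conjunct2[OF pp]] by simp
  have paths: "\<And>\<omega>. \<omega> \<in> space M \<Longrightarrow> N 0 \<omega> = 0 \<and>
        (\<forall>s t. 0 \<le> s \<and> s \<le> t \<longrightarrow> N s \<omega> \<le> N t \<omega>) \<and>
        (\<forall>t\<ge>0. \<exists>d>0. \<forall>s. t \<le> s \<and> s < t + d \<longrightarrow> N s \<omega> = N t \<omega>) \<and>
        (\<forall>t>0. \<exists>d>0. \<forall>s. t - d < s \<and> s < t \<longrightarrow> N t \<omega> \<le> N s \<omega> + 1)"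
    using conjunct1[OF conjunct2[OF conjunct2[OF pp]]] by (rule bspec)
  have Fc: "F (real c) \<ge> 0" using assms(6) by simp
  define xi where "xi = (\<lambda>t \<omega>. k - c * min (N t \<omega>) q)"
  have adm: "xi \<in> admissible M N k"
    unfolding admissible_def
  proof (intro CollectI conjI allI impI ballI)
    fix t :: real assume t: "t \<ge> 0"
    define G where "G = {N s -` A \<inter> space M | s A. 0 \<le> s \<and> s \<le> t}"
    have G: "G \<subseteq> Pow (space M)" unfolding G_def by auto
    show "xi t \<in> measurable (natural_filtration M N t) (count_space UNIV)"
    proof (rule measurableI)
      fix x assume "x \<in> space (natural_filtration M N t)" show "xi t x \<in> space (count_space UNIV)" by simp
    next
      fix A assume "A \<in> sets (count_space (UNIV::nat set))"
      have "xi t -` A \<inter> space M = N t -` {n. k - c * min n q \<in> A} \<inter> space M"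
        unfolding xi_def by auto
      moreover have "N t -` {n. k - c * min n q \<in> A} \<inter> space M \<in> G" unfolding G_def using t by blast
      ultimately have "xi t -` A \<inter> space M \<in> sigma_sets (space M) G" by auto
      thus "xi t -` A \<inter> space (natural_filtration M N t) \<in> sets (natural_filtration M N t)"
        unfolding natural_filtration_def G_def[symmetric] using G
        by (simp add: sets_measure_of space_measure_of_conv)
    qed
  next
    fix \<omega> assume "\<omega> \<in> space M"
    note P = paths[OF this]
    show "xi 0 \<omega> = k" using P unfolding xi_def by simp
    fix s t :: real
    { assume "0 \<le> s \<and> s \<le> t"
      hence "N s \<omega> \<le> N t \<omega>" using P by blast
      hence "min (N s \<omega>) q \<le> min (N t \<omega>) q" by simp
      thus "xi t \<omega> \<le> xi s \<omega>" unfolding xi_def by (simp add: diff_le_mono2) }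
    { assume "0 \<le> s \<and> s \<le> t \<and> N s \<omega> = N t \<omega>"
      thus "xi s \<omega> = xi t \<omega>" unfolding xi_def by simp }
  qed
  define h where "h n = real (min n q) * F (real c) + F (real k - real c * real (min n q))" for n
  have costle: "cost F N xi T \<omega> \<le> h (N T \<omega>)" if w: "\<omega> \<in> space M" for \<omega>
  proof -
    note P = paths[OF w]
    have "(\<Sum>i\<in>{i. 1 \<le> i \<and> Inf {t. 0\<le>t \<and> i \<le> N t \<omega>} \<le> T}.
           F (left_lim (\<lambda>t. k - c * min (N t \<omega>) q) (Inf {t. 0\<le>t \<and> i \<le> N t \<omega>})
              - real (k - c * min (N (Inf {t. 0\<le>t \<and> i \<le> N t \<omega>}) \<omega>) q)))
         + F (real (k - c * min (N T \<omega>) q))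
       \<le> real (min (N T \<omega>) q) * F (real c) + F (real k - real c * real (min (N T \<omega>) q))"
    proof (rule path_cost[where f="\<lambda>t. N t \<omega>"])
      show "N 0 \<omega> = 0" using P by (rule conjunct1)
      show "\<And>s t. 0\<le>s \<Longrightarrow> s\<le>t \<Longrightarrow> N s \<omega> \<le> N t \<omega>" using conjunct1[OF conjunct2[OF P]] by blast
      show "\<And>t. t\<ge>0 \<Longrightarrow> \<exists>d>0. \<forall>s. t\<le>s \<and> s<t+d \<longrightarrow> N s \<omega> = N t \<omega>"
        using conjunct1[OF conjunct2[OF conjunct2[OF P]]] by blast
      show "\<And>t. t>0 \<Longrightarrow> \<exists>d>0. \<forall>s. t-d<s \<and> s<t \<longrightarrow> N t \<omega> \<le> N s \<omega> + 1"
        using conjunct2[OF conjunct2[OF conjunct2[OF P]]] by blast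
    qed (fact cq, fact assms(5), fact Fc, fact assms(8))
    thus ?thesis unfolding cost_def arrival_time_def xi_def h_def .
  qed
  have "value_fn M F N k T \<le> (\<integral>\<^sup>+ \<omega>. ennreal (cost F N xi T \<omega>) \<partial>M)"
    unfolding value_fn_def by (rule INF_lower[OF adm])
  also have "\<dots> \<le> (\<integral>\<^sup>+ \<omega>. ennreal (h (N T \<omega>)) \<partial>M)"
    by (rule nn_integral_mono) (simp add: costle ennreal_leI)
  also have "\<dots> = ennreal (
        (real q * F (real c) + F (real k - real c * real q))
          * measure M {\<omega>\<in>space M. N T \<omega> \<ge> q}
        + (\<Sum>n<q. (real n * F (real c) + F (real k - real n * real c))
          * measure M {\<omega>\<in>space M. N T \<omega> = n}))"
  proof -
    define a where "a n = real n * F (real c) + F (real k - real n * real c)" for n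
    define b where "b = real q * F (real c) + F (real k - real c * real q)"
    have hpw: "h (N T \<omega>) = (if N T \<omega> < q then a (N T \<omega>) else b)" for \<omega>
    proof (cases "N T \<omega> < q")
      case True
      hence "min (N T \<omega>) q = N T \<omega>" by simp
      thus ?thesis using True unfolding h_def a_def by (simp add: mult.commute)
    next
      case False
      hence "min (N T \<omega>) q = q" by simp
      thus ?thesis using False unfolding h_def b_def by simp
    qed
    have a_nn: "a n \<ge> 0" if "n < q" for n
    proof -
      have "n * c \<le> q * c" using that by (intro mult_le_mono1) simp
      also have "\<dots> = c * q" by (rule mult.commute)
      finally have "n * c \<le> k" using cq by (rule le_trans)
      hence "real (n * c) \<le> real k" by (simp only: of_nat_le_iff)
      hence "real n * real c \<le> real k" by simp
      thus ?thesis unfolding a_def using assms(6) Fc by simp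
    qed
    have b_nn: "b \<ge> 0"
    proof -
      have "real (c * q) \<le> real k" using cq by (simp only: of_nat_le_iff)
      hence "real c * real q \<le> real k" by simp
      thus ?thesis unfolding b_def using assms(6) Fc by simp
    qed
    have "(\<integral>\<^sup>+ \<omega>. ennreal (h (N T \<omega>)) \<partial>M) = (\<integral>\<^sup>+ \<omega>. ennreal (if N T \<omega> < q then a (N T \<omega>) else b) \<partial>M)"
      by (simp only: hpw)
    also have "\<dots> = ennreal (b * measure M {\<omega>\<in>space M. N T \<omega> \<ge> q} + (\<Sum>n<q. a n * measure M {\<omega>\<in>space M. N T \<omega> = n}))"
      by (rule integral_part[OF PS measN[OF assms(8)] a_nn b_nn])
    finally show ?thesis unfolding a_def b_def .
  qed
  finally show "let q = nat \<lfloor>real k / real c\<rfloor> in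
      value_fn M F N k T \<le> ennreal (
        (real q * F (real c) + F (real k - real c * real q))
          * measure M {\<omega>\<in>space M. N T \<omega> \<ge> q}
        + (\<Sum>n<q. (real n * F (real c) + F (real k - real n * real c))
          * measure M {\<omega>\<in>space M. N T \<omega> = n}))"
    unfolding Let_def q_def[symmetric] .
qed

end
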